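(* Let $\mathcal N_2$ be the multiset $\{\{(w_2+\omega,w_3,w_1)\in\mathbb F_q^{3m}: w_1\in\Delta_A^c,\ w_2\in\Delta_B,\ w_3\in\Delta_C,\ \omega\in\{\mathbf 0,w_1\}\}\}$ (assuming $|A|<m$) and $\mathcal N_4$ the multiset $\{\{(w_2+\omega,w_3,w_1)\in\mathbb F_q^{3m}: w_1\in\Delta_A^*,\ w_2\in\Delta_B,\ w_3\in\Delta_C^c,\ \omega\in\{\mathbf 0,w_1\}\}\}$ (assuming $|C|<m$, $|A|\ge2$), where each multiset contains one element for each admissible tuple $(w_1,w_2,w_3,\omega)$. (a) If $B\subseteq A$, then all elements of $\mathcal N_2$ are distinct, and there is a subset $\overline{\mathcal N}_2\subseteq\mathcal N_2$ with $|\overline{\mathcal N}_2|=|\mathcal N_2|/(q-1)$, whose elements span pairwise distinct one-dimensional subspaces of $\mathbb F_q^{3m}$, such that $\mathcal N_2=\{\alpha x: x\in\overline{\mathcal N}_2,\ \alpha\in\mathbb F_q^*\}$. (b) If $A\cap B=\emptyset$, then all elements of $\mathcal N_4$ are distinct, and there is a subset $\overline{\mathcal N}_4\subseteq\mathcal N_4$ with $|\overline{\mathcal N}_4|=|\mathcal N_4|/(q-1)$, whose elements span pairwise distinct one-dimensional subspaces, such that $\mathcal N_4=\{\alpha x: x\in\overline{\mathcal N}_4,\ \alpha\in\mathbb F_q^*\}$.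
   Context: $q$ is a prime power, $\mathbb F_q$ the field of order $q$, $\mathbb F_q^*=\mathbb F_q\setminus\{0\}$, $m\ge2$, $[m]=\{1,\dots,m\}$, $\mathrm{supp}(v)=\{i:v_i\ne0\}$ for $v\in\mathbb F_q^m$. For nonempty $P\subseteq[m]$, $\Delta_P=\{v\in\mathbb F_q^m:\mathrm{supp}(v)\subseteq P\}$, $\Delta_P^c=\mathbb F_q^m\setminus\Delta_P$, $\Delta_P^*=\Delta_P\setminus\{\mathbf 0\}$. $A,B,C$ are nonempty subsets of $[m]$. Elements of $\mathbb F_q^{3m}$ are written $(x,y,z)$ with $x,y,z\in\mathbb F_q^m$. *)

theory Defs
  imports "HOL-Analysis.Analysis"
begin

(* F_q is a finite field type 'a (q = CARD('a)); [m] is a finite index type 'n (m = CARD('n));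
   F_q^m is 'a ^ 'n; F_q^{3m} is triples ('a^'n) \<times> ('a^'n) \<times> ('a^'n). *)

definition supp :: "'a::zero ^ 'n \<Rightarrow> 'n set" where
  "supp v = {i. v $ i \<noteq> 0}"

definition Delta :: "'n set \<Rightarrow> ('a::zero ^ 'n) set" where
  "Delta P = {v. supp v \<subseteq> P}"

definition DeltaC :: "'n set \<Rightarrow> ('a::zero ^ 'n) set" where
  "DeltaC P = UNIV - Delta P"

definition DeltaS :: "'n set \<Rightarrow> ('a::zero ^ 'n) set" where
  "DeltaS P = Delta P - {0}"

definition smult3 :: "'a::times \<Rightarrow> ('a^'n) \<times> ('a^'n) \<times> ('a^'n) \<Rightarrow> ('a^'n) \<times> ('a^'n) \<times> ('a^'n)" where
  "smult3 c v = (case v of (x, y, z) \<Rightarrow> (c *s x, c *s y, c *s z))"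

definition line3 :: "('a::field^'n) \<times> ('a^'n) \<times> ('a^'n) \<Rightarrow> (('a^'n) \<times> ('a^'n) \<times> ('a^'n)) set" where
  "line3 v = {smult3 c v | c. True}"

definition N2 :: "'n set \<Rightarrow> 'n set \<Rightarrow> 'n set \<Rightarrow> (('a::{field,finite}^'n::finite) \<times> ('a^'n) \<times> ('a^'n)) multiset" where
  "N2 A B C = image_mset (\<lambda>(w1, w2, w3, \<omega>). (w2 + \<omega>, w3, w1))
     (mset_set {(w1, w2, w3, \<omega>). w1 \<in> DeltaC A \<and> w2 \<in> Delta B \<and> w3 \<in> Delta C \<and> \<omega> \<in> {0, w1}})"

definition N4 :: "'n set \<Rightarrow> 'n set \<Rightarrow> 'n set \<Rightarrow> (('a::{field,finite}^'n::finite) \<times> ('a^'n) \<times> ('a^'n)) multiset" where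
  "N4 A B C = image_mset (\<lambda>(w1, w2, w3, \<omega>). (w2 + \<omega>, w3, w1))
     (mset_set {(w1, w2, w3, \<omega>). w1 \<in> DeltaS A \<and> w2 \<in> Delta B \<and> w3 \<in> DeltaC C \<and> \<omega> \<in> {0, w1}})"

definition projective_reps :: "(('a::{field,finite}^'n::finite) \<times> ('a^'n) \<times> ('a^'n)) multiset \<Rightarrow> bool" where
  "projective_reps N \<longleftrightarrow>
     (\<forall>x. count N x \<le> 1) \<and>
     (\<exists>Nbar. Nbar \<subseteq> set_mset N \<and>
        real (card Nbar) = real (size N) / real (CARD('a) - 1) \<and>
        (\<forall>x\<in>Nbar. x \<noteq> 0) \<and>
        (\<forall>x\<in>Nbar. \<forall>y\<in>Nbar. x \<noteq> y \<longrightarrow> line3 x \<noteq> line3 y) \<and>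
        N = mset_set {smult3 \<alpha> x | x \<alpha>. x \<in> Nbar \<and> \<alpha> \<noteq> 0})"

end

theory Submission
  imports Defs
begin

type_synonym ('a,'n) trip = "('a^'n) \<times> ('a^'n) \<times> ('a^'n)"

lemma smult3_mult: "smult3 a (smult3 b v) = smult3 (a * b) (v :: ('a::field,'n::finite) trip)"
  by (cases v) (simp add: smult3_def vector_smult_assoc)

lemma smult3_one: "smult3 1 (v :: ('a::field,'n::finite) trip) = v"
  by (cases v) (simp add: smult3_def)

lemma smult3_zero_iff: "smult3 c (v :: ('a::field,'n::finite) trip) = 0 \<longleftrightarrow> c = 0 \<or> v = 0"
  by (cases v) (auto simp: smult3_def vec_eq_iff zero_prod_def)

lemma smult3_inj:
  assumes "smult3 a x = smult3 b (x :: ('a::field,'n::finite) trip)" "x \<noteq> 0"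
  shows "a = b"
proof -
  obtain x1 x2 x3 where x: "x = (x1,x2,x3)" by (cases x)
  from assms(2) x have "\<exists>j. x1 $ j \<noteq> 0 \<or> x2 $ j \<noteq> 0 \<or> x3 $ j \<noteq> 0"
    by (auto simp: vec_eq_iff zero_prod_def)
  then obtain j where "x1 $ j \<noteq> 0 \<or> x2 $ j \<noteq> 0 \<or> x3 $ j \<noteq> 0" by blast
  moreover have e: "a * x1 $ j = b * x1 $ j" "a * x2 $ j = b * x2 $ j" "a * x3 $ j = b * x3 $ j"
  proof -
    have v: "a *s x1 = b *s x1" "a *s x2 = b *s x2" "a *s x3 = b *s x3"
      using assms(1) x by (simp_all add: smult3_def)
    show "a * x1 $ j = b * x1 $ j" using v(1) by (metis vector_smult_component)
    show "a * x2 $ j = b * x2 $ j" using v(2) by (metis vector_smult_component)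
    show "a * x3 $ j = b * x3 $ j" using v(3) by (metis vector_smult_component)
  qed
  ultimately show ?thesis
  proof (elim disjE)
    assume "x1 $ j \<noteq> 0" then show ?thesis using e(1) by simp
  next
    assume "x2 $ j \<noteq> 0" then show ?thesis using e(2) by simp
  next
    assume "x3 $ j \<noteq> 0" then show ?thesis using e(3) by simp
  qed
qed

lemma line3_eq:
  assumes "line3 x = line3 y" "y \<noteq> (0::('a::field,'n::finite) trip)"
  shows "\<exists>c. c \<noteq> 0 \<and> y = smult3 c x"
proof -
  have "y \<in> line3 y" unfolding line3_def using smult3_one[of y] by (metis (mono_tags, lifting) mem_Collect_eq)
  then have "y \<in> line3 x" using assms by simp
  then obtain c where "y = smult3 c x" unfolding line3_def by auto
  moreover have "c \<noteq> 0"
  proof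
    assume "c = 0"
    then have "y = 0" using \<open>y = smult3 c x\<close> smult3_zero_iff[of c x] by simp
    then show False using assms(2) by simp
  qed
  ultimately show ?thesis by blast
qed

lemma proj_lemma:
  fixes S :: "('a::{field,finite},'n::finite) trip set"
  assumes "0 \<notin> S" "\<forall>x\<in>S. \<forall>\<alpha>. \<alpha> \<noteq> 0 \<longrightarrow> smult3 \<alpha> x \<in> S"
  shows "\<exists>Nbar \<subseteq> S. card S = card Nbar * (CARD('a) - 1) \<and> (\<forall>x\<in>Nbar. x \<noteq> 0)
     \<and> (\<forall>x\<in>Nbar. \<forall>y\<in>Nbar. x \<noteq> y \<longrightarrow> line3 x \<noteq> line3 y)
     \<and> {smult3 \<alpha> x | x \<alpha>. x \<in> Nbar \<and> \<alpha> \<noteq> 0} = S"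
  using assms
proof (induction "card S" arbitrary: S rule: less_induct)
  case less
  show ?case
  proof (cases "S = {}")
    case True
    then show ?thesis by auto
  next
    case False
    then obtain x where xS: "x \<in> S" by blast
    have x0: "x \<noteq> 0" using xS less.prems by auto
    define L where "L = (\<lambda>\<alpha>. smult3 \<alpha> x) ` (UNIV - {0})"
    have LS: "L \<subseteq> S" using less.prems(2) xS unfolding L_def by blast
    have xL: "x \<in> L" unfolding L_def using smult3_one[of x] by (metis DiffI UNIV_I image_eqI singletonD zero_neq_one)
    have injL: "inj_on (\<lambda>\<alpha>. smult3 \<alpha> x) (UNIV - {0})"
      using smult3_inj x0 by (metis inj_onI)
    have cardL: "card L = CARD('a) - 1"
      unfolding L_def using card_image[OF injL] by (simp add: card_Diff_singleton)
    define S' where "S' = S - L"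
    have fin: "finite S" by simp
    have lt: "card S' < card S" unfolding S'_def using xL LS fin
      by (intro psubset_card_mono) auto
    have p1: "0 \<notin> S'" using less.prems unfolding S'_def by auto
    have p2: "\<forall>y\<in>S'. \<forall>\<alpha>. \<alpha> \<noteq> 0 \<longrightarrow> smult3 \<alpha> y \<in> S'"
    proof (intro ballI allI impI)
      fix y \<alpha> assume yS: "y \<in> S'" and a: "(\<alpha>::'a) \<noteq> 0"
      have "smult3 \<alpha> y \<in> S" using yS a less.prems unfolding S'_def by auto
      moreover have "smult3 \<alpha> y \<notin> L"
      proof
        assume "smult3 \<alpha> y \<in> L"
        then obtain \<beta> where b: "\<beta> \<noteq> 0" "smult3 \<alpha> y = smult3 \<beta> x" unfolding L_def by auto
        then have "smult3 (inverse \<alpha>) (smult3 \<alpha> y) = smult3 (inverse \<alpha> * \<beta>) x" by (simp add: smult3_mult)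
        then have "y = smult3 (inverse \<alpha> * \<beta>) x" using a by (simp add: smult3_mult smult3_one)
        moreover have "inverse \<alpha> * \<beta> \<noteq> 0" using a b by simp
        ultimately have "y \<in> L" unfolding L_def by auto
        then show False using yS unfolding S'_def by auto
      qed
      ultimately show "smult3 \<alpha> y \<in> S'" unfolding S'_def by auto
    qed
    obtain N' where N': "N' \<subseteq> S'" "card S' = card N' * (CARD('a) - 1)" "\<forall>x\<in>N'. x \<noteq> 0"
       "\<forall>x\<in>N'. \<forall>y\<in>N'. x \<noteq> y \<longrightarrow> line3 x \<noteq> line3 y"
       "{smult3 \<alpha> x | x \<alpha>. x \<in> N' \<and> \<alpha> \<noteq> 0} = S'"
      using less.hyps[OF lt p1 p2] by blast
    have xN': "x \<notin> N'" using N'(1) xL unfolding S'_def by auto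
    have finN': "finite N'" by (rule finite)
    have lines: "line3 x \<noteq> line3 y" if "y \<in> N'" for y
    proof
      assume "line3 x = line3 y"
      moreover have "y \<noteq> 0" using N'(3) that by blast
      ultimately obtain c where "c \<noteq> 0" "y = smult3 c x" using line3_eq by blast
      then have "y \<in> L" unfolding L_def by auto
      then show False using that N'(1) unfolding S'_def by auto
    qed
    have cLS: "card L \<le> card S" using card_mono[OF fin LS] .
    have cS: "card S = card S' + card L" unfolding S'_def
      using card_Diff_subset[OF finite[of L] LS] cLS by simp
    show ?thesis
    proof (intro exI[of _ "insert x N'"] conjI)
      show "insert x N' \<subseteq> S" using N'(1) xS unfolding S'_def by auto
      show "card S = card (insert x N') * (CARD('a) - 1)"
        using cS cardL N'(2) card_insert_disjoint[OF finN' xN'] by simp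
      show "\<forall>x\<in>insert x N'. x \<noteq> 0" using x0 N'(3) by auto
      show "\<forall>xa\<in>insert x N'. \<forall>y\<in>insert x N'. xa \<noteq> y \<longrightarrow> line3 xa \<noteq> line3 y"
      proof (intro ballI impI)
        fix a b assume ab: "a \<in> insert x N'" "b \<in> insert x N'" "a \<noteq> b"
        show "line3 a \<noteq> line3 b"
        proof (cases "a = x")
          case True
          then show ?thesis using ab lines by auto
        next
          case False
          then have aN: "a \<in> N'" using ab by auto
          show ?thesis
          proof (cases "b = x")
            case True
            then show ?thesis using lines[OF aN] by metis
          next
            case False
            then show ?thesis using aN ab N'(4) by auto
          qed
        qed
      qed
      show "{smult3 \<alpha> xa |xa \<alpha>. xa \<in> insert x N' \<and> \<alpha> \<noteq> 0} = S"
      proof -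
        have "{smult3 \<alpha> xa |xa \<alpha>. xa \<in> insert x N' \<and> \<alpha> \<noteq> 0}
            = L \<union> {smult3 \<alpha> x | x \<alpha>. x \<in> N' \<and> \<alpha> \<noteq> 0}"
        proof (rule set_eqI, rule iffI)
          fix z assume "z \<in> {smult3 \<alpha> xa |xa \<alpha>. xa \<in> insert x N' \<and> \<alpha> \<noteq> 0}"
          then obtain xa \<alpha> where z: "z = smult3 \<alpha> xa" "xa \<in> insert x N'" "\<alpha> \<noteq> 0" by blast
          show "z \<in> L \<union> {smult3 \<alpha> x | x \<alpha>. x \<in> N' \<and> \<alpha> \<noteq> 0}"
          proof (cases "xa = x")
            case True
            then have "z \<in> L" unfolding L_def using z by blast
            then show ?thesis by blast
          next
            case False
            then show ?thesis using z by blast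
          qed
        next
          fix z assume "z \<in> L \<union> {smult3 \<alpha> x | x \<alpha>. x \<in> N' \<and> \<alpha> \<noteq> 0}"
          then show "z \<in> {smult3 \<alpha> xa |xa \<alpha>. xa \<in> insert x N' \<and> \<alpha> \<noteq> 0}"
          proof (rule UnE)
            assume "z \<in> L"
            then obtain \<alpha> where "\<alpha> \<in> UNIV - {0::'a}" "z = smult3 \<alpha> x" unfolding L_def by (rule imageE)
            then show ?thesis by blast
          next
            assume "z \<in> {smult3 \<alpha> x | x \<alpha>. x \<in> N' \<and> \<alpha> \<noteq> 0}"
            then obtain xa \<alpha> where "z = smult3 \<alpha> xa" "xa \<in> N'" "\<alpha> \<noteq> 0" by blast
            then show ?thesis by blast
          qed
        qed
        also have "\<dots> = S" using N'(5) LS unfolding S'_def by (simp add: Un_Diff_cancel Un_absorb1)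
        finally show ?thesis .
      qed
    qed
  qed
qed

lemma supp_smult: "(\<alpha>::'a::field) \<noteq> 0 \<Longrightarrow> supp (\<alpha> *s (v::'a^'n)) = supp v"
  by (auto simp: supp_def)

lemma supp_diff: "supp ((u::'a::ab_group_add^'n) - v) \<subseteq> supp u \<union> supp v"
  by (auto simp: supp_def)

lemma zero_Delta: "(0::'a::zero^'n) \<in> Delta P"
  by (simp add: Delta_def supp_def)

lemma supp_empty: "supp (v::'a::zero^'n) = {} \<Longrightarrow> v = 0"
  by (auto simp: supp_def vec_eq_iff)

lemma card_field_ge2: "CARD('a::{field,finite}) \<ge> 2"
proof -
  have "card {0::'a, 1} = 2" by simp
  moreover have "card {0::'a, 1} \<le> CARD('a)" by (rule card_mono) auto
  ultimately show ?thesis by simp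
qed

lemma proj_reps_set:
  fixes S :: "('a::{field,finite},'n::finite) trip set"
  assumes "0 \<notin> S" "\<forall>x\<in>S. \<forall>\<alpha>. \<alpha> \<noteq> 0 \<longrightarrow> smult3 \<alpha> x \<in> S"
  shows "projective_reps (mset_set S)"
proof -
  obtain Nbar where N: "Nbar \<subseteq> S" "card S = card Nbar * (CARD('a) - 1)" "\<forall>x\<in>Nbar. x \<noteq> 0"
     "\<forall>x\<in>Nbar. \<forall>y\<in>Nbar. x \<noteq> y \<longrightarrow> line3 x \<noteq> line3 y"
     "{smult3 \<alpha> x | x \<alpha>. x \<in> Nbar \<and> \<alpha> \<noteq> 0} = S"
    using proj_lemma[OF assms] by blast
  have q: "real (CARD('a) - 1) > 0" using card_field_ge2[where 'a='a] by simp
  have "real (card Nbar) = real (card S) / real (CARD('a) - 1)"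
    using N(2) q by (simp add: field_simps)
  then show ?thesis unfolding projective_reps_def
    using N by (auto simp: count_mset_set')
qed

theorem mainTheorem11:
  fixes A B C :: "'n::finite set"
  assumes "CARD('n) \<ge> 2"
    and "A \<noteq> {}" and "B \<noteq> {}" and "C \<noteq> {}"
  shows "(card A < CARD('n) \<and> B \<subseteq> A \<longrightarrow>
            projective_reps (N2 A B C :: (('a::{field,finite}^'n) \<times> ('a^'n) \<times> ('a^'n)) multiset))
       \<and> (card C < CARD('n) \<and> card A \<ge> 2 \<and> A \<inter> B = {} \<longrightarrow>
            projective_reps (N4 A B C :: (('a^'n) \<times> ('a^'n) \<times> ('a^'n)) multiset))"
proof (intro conjI impI)
  define f :: "('a^'n) \<times> ('a^'n) \<times> ('a^'n) \<times> ('a^'n) \<Rightarrow> ('a,'n) trip"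
    where "f = (\<lambda>(w1, w2, w3, \<omega>). (w2 + \<omega>, w3, w1))"
  have fsm: "smult3 \<alpha> (f (w1,w2,w3,\<omega>)) = f (\<alpha> *s w1, \<alpha> *s w2, \<alpha> *s w3, \<alpha> *s \<omega>)" for \<alpha> w1 w2 w3 \<omega>
    by (simp add: f_def smult3_def vector_add_ldistrib)
  {
    assume "card A < CARD('n) \<and> B \<subseteq> A"
    then have BA: "B \<subseteq> A" by simp
    define T where "T = {(w1, w2, w3, \<omega>). (w1::'a^'n) \<in> DeltaC A \<and> (w2::'a^'n) \<in> Delta B \<and> (w3::'a^'n) \<in> Delta C \<and> \<omega> \<in> {0, w1}}"
    have inj: "inj_on f T"
    proof (rule inj_onI)
      fix s t assume sT: "s \<in> T" and tT: "t \<in> T" and e: "f s = f t"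
      obtain w1 w2 w3 \<omega> where s: "s = (w1,w2,w3,\<omega>)" by (cases s) auto
      obtain v1 v2 v3 \<eta> where t: "t = (v1,v2,v3,\<eta>)" by (cases t) auto
      have e1: "w1 = v1" "w3 = v3" "w2 + \<omega> = v2 + \<eta>" using e s t by (auto simp: f_def)
      have bad: False if "u2 = u1 + u2'" "u1 \<in> DeltaC A" "u2 \<in> Delta B" "u2' \<in> Delta B" for u1 u2 u2' :: "'a^'n"
      proof -
        have "u1 = u2 - u2'" using that by simp
        then have "supp u1 \<subseteq> B" using supp_diff[of u2 u2'] that(3,4) by (auto simp: Delta_def)
        then show False using that(2) BA by (auto simp: DeltaC_def Delta_def)
      qed
      have o: "\<omega> = 0 \<or> \<omega> = w1" "\<eta> = 0 \<or> \<eta> = w1" using sT tT e1(1) unfolding s t T_def by auto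
      have m: "w1 \<in> DeltaC A" "w2 \<in> Delta B" "v2 \<in> Delta B" using sT tT unfolding s t T_def by auto
      have "w2 = v2 \<and> \<omega> = \<eta>"
      proof (cases "\<omega> = 0")
        case True
        show ?thesis
        proof (cases "\<eta> = 0")
          case True
          then show ?thesis using \<open>\<omega> = 0\<close> e1 by simp
        next
          case False
          then have "w2 = w1 + v2" using o \<open>\<omega> = 0\<close> e1 by simp
          then show ?thesis using bad m by blast
        qed
      next
        case False
        show ?thesis
        proof (cases "\<eta> = 0")
          case True
          then have "v2 = w1 + w2" using o \<open>\<omega> \<noteq> 0\<close> e1 by (simp add: add.commute)
          then show ?thesis using bad m by blast
        next
          case False
          then show ?thesis using \<open>\<omega> \<noteq> 0\<close> o e1 by simp
        qed
      qed
      then show "s = t" using e1 unfolding s t by simp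
    qed
    have N2eq: "(N2 A B C :: ('a,'n) trip multiset) = mset_set (f ` T)"
      unfolding N2_def T_def[symmetric] f_def[symmetric] by (rule image_mset_mset_set[OF inj])
    show "projective_reps (N2 A B C :: ('a,'n) trip multiset)"
      unfolding N2eq
    proof (rule proj_reps_set)
      show "0 \<notin> f ` T"
        using zero_Delta[of A] by (auto simp: T_def f_def DeltaC_def zero_prod_def)
      show "\<forall>x\<in>f ` T. \<forall>\<alpha>. \<alpha> \<noteq> 0 \<longrightarrow> smult3 \<alpha> x \<in> f ` T"
      proof (intro ballI allI impI)
        fix x and \<alpha> :: 'a assume "x \<in> f ` T" "\<alpha> \<noteq> 0"
        then obtain w1 w2 w3 \<omega> where "(w1,w2,w3,\<omega>) \<in> T" "x = f (w1,w2,w3,\<omega>)" by auto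
        note h = this
        have "(\<alpha> *s w1, \<alpha> *s w2, \<alpha> *s w3, \<alpha> *s \<omega>) \<in> T"
          using h(1) \<open>\<alpha> \<noteq> 0\<close> by (auto simp: T_def DeltaC_def Delta_def supp_smult)
        then show "smult3 \<alpha> x \<in> f ` T" unfolding h(2) fsm by (rule imageI)
      qed
    qed
  }
  {
    assume "card C < CARD('n) \<and> card A \<ge> 2 \<and> A \<inter> B = {}"
    then have AB: "A \<inter> B = {}" by simp
    define T where "T = {(w1, w2, w3, \<omega>). (w1::'a^'n) \<in> DeltaS A \<and> (w2::'a^'n) \<in> Delta B \<and> (w3::'a^'n) \<in> DeltaC C \<and> \<omega> \<in> {0, w1}}"
    have inj: "inj_on f T"
    proof (rule inj_onI)
      fix s t assume sT: "s \<in> T" and tT: "t \<in> T" and e: "f s = f t"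
      obtain w1 w2 w3 \<omega> where s: "s = (w1,w2,w3,\<omega>)" by (cases s) auto
      obtain v1 v2 v3 \<eta> where t: "t = (v1,v2,v3,\<eta>)" by (cases t) auto
      have e1: "w1 = v1" "w3 = v3" "w2 + \<omega> = v2 + \<eta>" using e s t by (auto simp: f_def)
      have bad: False if "u2 = u1 + u2'" "u1 \<in> DeltaS A" "u2 \<in> Delta B" "u2' \<in> Delta B" for u1 u2 u2' :: "'a^'n"
      proof -
        have "u1 = u2 - u2'" using that by simp
        then have "supp u1 \<subseteq> B" using supp_diff[of u2 u2'] that(3,4) by (auto simp: Delta_def)
        moreover have "supp u1 \<subseteq> A" using that(2) by (auto simp: DeltaS_def Delta_def)
        ultimately have "supp u1 = {}" using AB by blast
        then show False using that(2) supp_empty[of u1] by (auto simp: DeltaS_def)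
      qed
      have o: "\<omega> = 0 \<or> \<omega> = w1" "\<eta> = 0 \<or> \<eta> = w1" using sT tT e1(1) unfolding s t T_def by auto
      have m: "w1 \<in> DeltaS A" "w2 \<in> Delta B" "v2 \<in> Delta B" using sT tT unfolding s t T_def by auto
      have "w2 = v2 \<and> \<omega> = \<eta>"
      proof (cases "\<omega> = 0")
        case True
        show ?thesis
        proof (cases "\<eta> = 0")
          case True
          then show ?thesis using \<open>\<omega> = 0\<close> e1 by simp
        next
          case False
          then have "w2 = w1 + v2" using o \<open>\<omega> = 0\<close> e1 by simp
          then show ?thesis using bad m by blast
        qed
      next
        case False
        show ?thesis
        proof (cases "\<eta> = 0")
          case True
          then have "v2 = w1 + w2" using o \<open>\<omega> \<noteq> 0\<close> e1 by (simp add: add.commute)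
          then show ?thesis using bad m by blast
        next
          case False
          then show ?thesis using \<open>\<omega> \<noteq> 0\<close> o e1 by simp
        qed
      qed
      then show "s = t" using e1 unfolding s t by simp
    qed
    have N4eq: "(N4 A B C :: ('a,'n) trip multiset) = mset_set (f ` T)"
      unfolding N4_def T_def[symmetric] f_def[symmetric] by (rule image_mset_mset_set[OF inj])
    show "projective_reps (N4 A B C :: ('a,'n) trip multiset)"
      unfolding N4eq
    proof (rule proj_reps_set)
      show "0 \<notin> f ` T"
        using zero_Delta[of C] by (auto simp: T_def f_def DeltaC_def zero_prod_def)
      show "\<forall>x\<in>f ` T. \<forall>\<alpha>. \<alpha> \<noteq> 0 \<longrightarrow> smult3 \<alpha> x \<in> f ` T"
      proof (intro ballI allI impI)
        fix x and \<alpha> :: 'a assume "x \<in> f ` T" "\<alpha> \<noteq> 0"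
        then obtain w1 w2 w3 \<omega> where "(w1,w2,w3,\<omega>) \<in> T" "x = f (w1,w2,w3,\<omega>)" by auto
        note h = this
        have "(\<alpha> *s w1, \<alpha> *s w2, \<alpha> *s w3, \<alpha> *s \<omega>) \<in> T"
          using h(1) \<open>\<alpha> \<noteq> 0\<close> by (auto simp: T_def DeltaC_def DeltaS_def Delta_def supp_smult)
        then show "smult3 \<alpha> x \<in> f ` T" unfolding h(2) fsm by (rule imageI)
      qed
    qed
  }
qed

end
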